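(* Let $\epsilon>0$ and $\delta\in(0,1)$, and let $M=\max_{c\in C}\max_{v\in V} f_c(v\mid\emptyset)>0$. If $\mathrm{OPT}\ge\frac{4}{\epsilon^2}M\log(2k)$, then Algorithm 2 with failure parameter $\delta$ outputs a set $S$ with $|S|\le B$ such that \[ \min_{c\in C} f_c(S)\;\ge\;\left(1-\frac1e-\epsilon\right)\mathrm{OPT} \] with probability at least $1-\delta$.
   Context: Setup: $V$ is a finite nonempty ground set, $C$ is a finite nonempty set of "colors", $k=|C|$. For each $c\in C$, $f_c\colon 2^V\to\mathbb{R}_{\ge 0}$ is monotone and submodular. $B$ is a positive integer (the budget). $f(T\mid S)=f(S\cup T)-f(S)$ and $f(v\mid S)=f(\{v\}\mid S)$. $\mathrm{OPT}=\max_{S\subseteq V,\,|S|\le B}\min_{c\in C} f_c(S)$. $\Delta_V$ is the probability simplex over $V$; $\log$ is the natural logarithm unless indicated. $\mathrm{LP}(S)$ is the linear program in variables $\xi\in\mathbb{R}$, $x\in\mathbb{R}^V$: maximize $\xi$ subject to $\sum_{v\in V} x_v\,(B f_c(v\mid S)+f_c(S))\ge \xi$ for all $c\in C$, $\sum_{v\in V}x_v=1$, $x_v\ge 0$ for all $v\in V$. Algorithm 2 (input: the $f_c$, $B$, $\delta$): set $S_{\mathrm{best}}=\emptyset$. Repeat, with independent randomness, $\lceil\log_2(2/\delta)\rceil$ times: set $S^{(0)}=\emptyset$; for $i=1,\dots,B$: let $x^{(i)}\in\Delta_V$ be (the $x$-part of) an optimal solution of $\mathrm{LP}(S^{(i-1)})$,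 sample $v^{(i)}\sim x^{(i)}$, set $S^{(i)}=S^{(i-1)}\cup\{v^{(i)}\}$; then if $\min_{c}f_c(S^{(B)})\ge\min_c f_c(S_{\mathrm{best}})$ set $S_{\mathrm{best}}=S^{(B)}$. Output $S_{\mathrm{best}}$. *)

theory Defs
  imports "HOL-Probability.Probability"
begin

definition monotone_on_sets :: "'v set \<Rightarrow> ('v set \<Rightarrow> real) \<Rightarrow> bool" where
  "monotone_on_sets V g \<longleftrightarrow> (\<forall>S T. S \<subseteq> T \<and> T \<subseteq> V \<longrightarrow> g S \<le> g T)"

definition submodular_on :: "'v set \<Rightarrow> ('v set \<Rightarrow> real) \<Rightarrow> bool" where
  "submodular_on V g \<longleftrightarrow>
     (\<forall>S T. S \<subseteq> V \<and> T \<subseteq> V \<longrightarrow> g (S \<union> T) + g (S \<inter> T) \<le> g S + g T)"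

definition marg :: "('v set \<Rightarrow> real) \<Rightarrow> 'v \<Rightarrow> 'v set \<Rightarrow> real" where
  "marg g v S = g (S \<union> {v}) - g S"

definition minval :: "'c set \<Rightarrow> ('c \<Rightarrow> 'v set \<Rightarrow> real) \<Rightarrow> 'v set \<Rightarrow> real" where
  "minval C f S = Min ((\<lambda>c. f c S) ` C)"

definition OPT :: "'v set \<Rightarrow> 'c set \<Rightarrow> ('c \<Rightarrow> 'v set \<Rightarrow> real) \<Rightarrow> nat \<Rightarrow> real" where
  "OPT V C f B = Max {minval C f S | S. S \<subseteq> V \<and> card S \<le> B}"

text \<open>Objective of LP(S) at a point x of the simplex (the optimal xi for fixed x):
  min over colors of sum_v x_v (B f_c(v|S) + f_c(S)).  Points of the simplex over V
  are represented as pmfs supported in V.\<close>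
definition lp_obj :: "'v set \<Rightarrow> 'c set \<Rightarrow> ('c \<Rightarrow> 'v set \<Rightarrow> real) \<Rightarrow> nat \<Rightarrow> 'v set \<Rightarrow> 'v pmf \<Rightarrow> real" where
  "lp_obj V C f B S x =
     Min ((\<lambda>c. \<Sum>v\<in>V. pmf x v * (real B * marg (f c) v S + f c S)) ` C)"

definition lp_optimal :: "'v set \<Rightarrow> 'c set \<Rightarrow> ('c \<Rightarrow> 'v set \<Rightarrow> real) \<Rightarrow> nat \<Rightarrow> 'v set \<Rightarrow> 'v pmf \<Rightarrow> bool" where
  "lp_optimal V C f B S x \<longleftrightarrow> set_pmf x \<subseteq> V \<and>
     (\<forall>y. set_pmf y \<subseteq> V \<longrightarrow> lp_obj V C f B S y \<le> lp_obj V C f B S x)"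

text \<open>One run of the inner loop (i steps), given a rule sel choosing an optimal LP solution.\<close>
primrec greedy_run :: "('v set \<Rightarrow> 'v pmf) \<Rightarrow> nat \<Rightarrow> 'v set pmf" where
  "greedy_run sel 0 = return_pmf {}"
| "greedy_run sel (Suc i) = bind_pmf (greedy_run sel i) (\<lambda>S. map_pmf (\<lambda>v. S \<union> {v}) (sel S))"

primrec alg_rep :: "'c set \<Rightarrow> ('c \<Rightarrow> 'v set \<Rightarrow> real) \<Rightarrow> nat \<Rightarrow> ('v set \<Rightarrow> 'v pmf) \<Rightarrow> nat \<Rightarrow> 'v set pmf" where
  "alg_rep C f B sel 0 = return_pmf {}"
| "alg_rep C f B sel (Suc r) = bind_pmf (alg_rep C f B sel r) (\<lambda>Sbest.
      map_pmf (\<lambda>S. if minval C f S \<ge> minval C f Sbest then S else Sbest) (greedy_run sel B))"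

definition algorithm2 :: "'c set \<Rightarrow> ('c \<Rightarrow> 'v set \<Rightarrow> real) \<Rightarrow> nat \<Rightarrow> ('v set \<Rightarrow> 'v pmf) \<Rightarrow> real \<Rightarrow> 'v set pmf" where
  "algorithm2 C f B sel \<delta> = alg_rep C f B sel (nat \<lceil>log 2 (2 / \<delta>)\<rceil>)"

end

theory Submission imports Defs begin

locale setting =
  fixes V :: "'v set" and C :: "'c set" and f :: "'c \<Rightarrow> 'v set \<Rightarrow> real"
    and M :: real and B :: nat and sel :: "'v set \<Rightarrow> 'v pmf"
  assumes finV: "finite V" and neV: "V \<noteq> {}" and finC: "finite C" and neC: "C \<noteq> {}"
    and nonneg: "\<And>c S. c \<in> C \<Longrightarrow> S \<subseteq> V \<Longrightarrow> f c S \<ge> 0"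
    and mono: "\<And>c. c \<in> C \<Longrightarrow> monotone_on_sets V (f c)"
    and submod: "\<And>c. c \<in> C \<Longrightarrow> submodular_on V (f c)"
    and Bpos: "B > 0"
    and selopt: "\<And>S. S \<subseteq> V \<Longrightarrow> lp_optimal V C f B S (sel S)"
    and M_def: "M = Max ((\<lambda>(c, v). marg (f c) v {}) ` (C \<times> V))"
    and Mpos: "M > 0"
begin

lemma monoD: "c \<in> C \<Longrightarrow> S \<subseteq> T \<Longrightarrow> T \<subseteq> V \<Longrightarrow> f c S \<le> f c T"
  using mono unfolding monotone_on_sets_def by blast

lemma submodD: "c \<in> C \<Longrightarrow> S \<subseteq> V \<Longrightarrow> T \<subseteq> V \<Longrightarrow> f c (S \<union> T) + f c (S \<inter> T) \<le> f c S + f c T"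
  using submod unfolding submodular_on_def by blast

lemma marg_nonneg: "c \<in> C \<Longrightarrow> S \<subseteq> V \<Longrightarrow> v \<in> V \<Longrightarrow> marg (f c) v S \<ge> 0"
  unfolding marg_def using monoD[of c S "S \<union> {v}"] by auto

lemma marg_le_M: assumes "c \<in> C" "S \<subseteq> V" "v \<in> V" shows "marg (f c) v S \<le> M"
proof -
  have "marg (f c) v {} \<le> M" unfolding M_def
    by (rule Max_ge) (use assms finC finV in auto)
  moreover have "marg (f c) v S \<le> marg (f c) v {}"
  proof (cases "v \<in> S")
    case True
    then have "S \<union> {v} = S" by auto
    then have "marg (f c) v S = 0" unfolding marg_def by simp
    moreover have "marg (f c) v {} \<ge> 0" using marg_nonneg assms by blast
    ultimately show ?thesis by simp
  next
    case False
    then have "S \<inter> {v} = {}" by auto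
    with submodD[OF assms(1,2), of "{v}"] assms show ?thesis unfolding marg_def by auto
  qed
  ultimately show ?thesis by simp
qed

lemma submod_sum:
  assumes c: "c \<in> C" and S: "S \<subseteq> V" and T: "T \<subseteq> V"
  shows "f c (S \<union> T) - f c S \<le> (\<Sum>v\<in>T. marg (f c) v S)"
proof -
  have "finite T" using T finV finite_subset by blast
  from this T show ?thesis
  proof (induction T rule: finite_induct)
    case empty then show ?case by simp
  next
    case (insert v T)
    have vV: "v \<in> V" and TV: "T \<subseteq> V" using insert.prems by auto
    have sm: "f c ((S \<union> {v}) \<union> (S \<union> T)) + f c ((S \<union> {v}) \<inter> (S \<union> T)) \<le> f c (S \<union> {v}) + f c (S \<union> T)"
      by (rule submodD) (use c S vV TV in auto)
    have "f c S \<le> f c ((S \<union> {v}) \<inter> (S \<union> T))" by (rule monoD) (use c S vV TV in auto)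
    moreover have "(S \<union> {v}) \<union> (S \<union> T) = S \<union> insert v T" by auto
    ultimately have "f c (S \<union> insert v T) - f c (S \<union> T) \<le> marg (f c) v S"
      using sm unfolding marg_def by (simp only:)
    with insert.IH[OF TV] insert.hyps show ?case by simp
  qed
qed

lemma OPT_witness:
  obtains T where "T \<subseteq> V" "T \<noteq> {}" "card T \<le> B" "\<And>c. c \<in> C \<Longrightarrow> f c T \<ge> OPT V C f B"
proof -
  let ?A = "{minval C f S | S. S \<subseteq> V \<and> card S \<le> B}"
  have "?A = minval C f ` {S. S \<subseteq> V \<and> card S \<le> B}" by auto
  moreover have "finite {S. S \<subseteq> V \<and> card S \<le> B}" using finV by auto
  ultimately have finA: "finite ?A" by simp
  have "minval C f {} \<in> ?A" by auto
  then have neA: "?A \<noteq> {}" by blast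
  have "OPT V C f B \<in> ?A" unfolding OPT_def using Max_in[OF finA neA] .
  then obtain S where S: "S \<subseteq> V" "card S \<le> B" "minval C f S = OPT V C f B" by auto
  obtain v0 where v0: "v0 \<in> V" using neV by auto
  define T where "T = (if S = {} then {v0} else S)"
  have TV: "T \<subseteq> V" using S v0 T_def by auto
  have "T \<noteq> {}" unfolding T_def by auto
  moreover have "card T \<le> B" using S Bpos unfolding T_def by auto
  moreover have "f c T \<ge> OPT V C f B" if c: "c \<in> C" for c
  proof -
    have "minval C f S \<le> f c S" unfolding minval_def by (rule Min_le) (use finC c in auto)
    moreover have "f c S \<le> f c T" by (rule monoD[OF c _ TV]) (auto simp: T_def)
    ultimately show ?thesis using S by simp
  qed
  ultimately show ?thesis using that TV by blast
qed

lemma lp_bound: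
  assumes S: "S \<subseteq> V" and c: "c \<in> C"
  shows "OPT V C f B - f c S \<le> real B * (\<Sum>v\<in>V. pmf (sel S) v * marg (f c) v S)"
proof -
  obtain T where T: "T \<subseteq> V" "T \<noteq> {}" "card T \<le> B" "\<And>c. c \<in> C \<Longrightarrow> f c T \<ge> OPT V C f B"
    using OPT_witness by blast
  have finT: "finite T" using T finV finite_subset by blast
  have suppT: "set_pmf (pmf_of_set T) \<subseteq> V" using T finT by simp
  have cardpos: "card T > 0" using finT T by (simp add: card_gt_0_iff)
  have obj: "lp_obj V C f B S (pmf_of_set T) \<ge> OPT V C f B"
    unfolding lp_obj_def
  proof (subst Min_ge_iff, (use finC neC in auto)[2], intro ballI, elim imageE)
    fix y d assume y: "y = (\<Sum>v\<in>V. pmf (pmf_of_set T) v * (real B * marg (f d) v S + f d S))" and d: "d \<in> C"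
    have "y = (\<Sum>v\<in>V. indicator T v / card T * (real B * marg (f d) v S + f d S))"
      using y finT T by simp
    also have "\<dots> = (\<Sum>v\<in>T. 1 / card T * (real B * marg (f d) v S + f d S))"
      using T finV by (intro sum.mono_neutral_cong_right) (auto simp: indicator_def)
    also have "\<dots> = (1 / card T) * (\<Sum>v\<in>T. (real B * marg (f d) v S + f d S))"
      by (simp add: sum_distrib_left)
    also have "(\<Sum>v\<in>T. (real B * marg (f d) v S + f d S)) = real B * (\<Sum>v\<in>T. marg (f d) v S) + card T * f d S"
      by (simp add: sum.distrib sum_distrib_left)
    also have "(1 / card T) * (real B * (\<Sum>v\<in>T. marg (f d) v S) + card T * f d S) = (real B / card T) * (\<Sum>v\<in>T. marg (f d) v S) + f d S"
      using cardpos by (simp add: field_simps)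
    finally have y2: "y = (real B / card T) * (\<Sum>v\<in>T. marg (f d) v S) + f d S" .
    have sn: "(\<Sum>v\<in>T. marg (f d) v S) \<ge> 0" using marg_nonneg[OF d S] T by (intro sum_nonneg) auto
    have "real B / card T \<ge> 1" using T cardpos by simp
    then have "(real B / card T) * (\<Sum>v\<in>T. marg (f d) v S) \<ge> (\<Sum>v\<in>T. marg (f d) v S)"
      using sn by (metis mult_le_cancel_right1 order.strict_iff_not)
    moreover have "f d (S \<union> T) - f d S \<le> (\<Sum>v\<in>T. marg (f d) v S)" by (rule submod_sum[OF d S T(1)])
    moreover have "f d T \<le> f d (S \<union> T)" by (rule monoD) (use d S T in auto)
    moreover note T(4)[OF d]
    ultimately show "OPT V C f B \<le> y" using y2 by linarith
  qed
  have so: "lp_optimal V C f B S (sel S)" using selopt[OF S] .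
  then have sub: "set_pmf (sel S) \<subseteq> V" unfolding lp_optimal_def by blast
  have "lp_obj V C f B S (pmf_of_set T) \<le> lp_obj V C f B S (sel S)"
    using so suppT unfolding lp_optimal_def by blast
  also have "\<dots> \<le> (\<Sum>v\<in>V. pmf (sel S) v * (real B * marg (f c) v S + f c S))"
    unfolding lp_obj_def by (rule Min_le) (use finC c in auto)
  also have "\<dots> = real B * (\<Sum>v\<in>V. pmf (sel S) v * marg (f c) v S) + (\<Sum>v\<in>V. pmf (sel S) v) * f c S"
    by (simp add: algebra_simps sum.distrib sum_distrib_left sum_distrib_right)
  also have "(\<Sum>v\<in>V. pmf (sel S) v) = 1" by (rule sum_pmf_eq_1[OF finV sub])
  finally show ?thesis using obj by simp
qed

end

lemma exp_convex_bound:
  fixes m M y :: real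
  assumes "0 \<le> m" "m \<le> M" "M > 0" "y \<ge> 0"
  shows "exp (- y * m) \<le> 1 - (m / M) * (1 - exp (- y * M))"
proof -
  have cv: "convex_on UNIV (\<lambda>x. exp (y * x))" by (rule convex_on_exp) (use assms in auto)
  define t where "t = m / M"
  have t: "0 \<le> t" "t \<le> 1" using assms by (auto simp: t_def)
  have "exp (y * ((1 - t) *\<^sub>R 0 + t *\<^sub>R (- M))) \<le> (1 - t) * exp (y * 0) + t * exp (y * (- M))"
    using convex_onD[OF cv, of t 0 "-M"] t by simp
  moreover have "(1 - t) *\<^sub>R 0 + t *\<^sub>R (- M) = - m" using assms by (simp add: t_def)
  ultimately show ?thesis by (simp add: t_def algebra_simps)
qed

context setting begin

definition h :: "real \<Rightarrow> real" where
  "h y = y - (1 - exp (- y * M)) / (M * real B)"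

lemma h_nonneg: assumes "y \<ge> 0" shows "h y \<ge> 0"
proof -
  have "1 - exp (- y * M) \<le> y * M" using exp_ge_add_one_self[of "- y * M"] by simp
  then have "(1 - exp (- y * M)) / (M * real B) \<le> y * M / (M * real B)"
    using Mpos Bpos by (intro divide_right_mono) auto
  also have "\<dots> = y / real B" using Mpos by simp
  also have "\<dots> \<le> y" using Bpos assms by (simp add: divide_le_eq mult_le_cancel_left1)
  finally show ?thesis unfolding h_def by simp
qed

abbreviation "OP \<equiv> OPT V C f B"

lemma step_bound:
  assumes S: "S \<subseteq> V" and c: "c \<in> C" and y: "y \<ge> 0"
  shows "(\<Sum>v\<in>V. pmf (sel S) v * exp (y * (OP - f c (S \<union> {v})))) \<le> exp (h y * (OP - f c S))"
proof -
  define g where "g = OP - f c S"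
  define lam where "lam = (1 - exp (- y * M)) / M"
  have lam0: "lam \<ge> 0" using Mpos y by (simp add: lam_def)
  have sub: "set_pmf (sel S) \<subseteq> V" using selopt[OF S] unfolding lp_optimal_def by blast
  have each: "pmf (sel S) v * exp (y * (OP - f c (S \<union> {v}))) \<le> exp (y * g) * (pmf (sel S) v * (1 - lam * marg (f c) v S))"
    if v: "v \<in> V" for v
  proof -
    have e: "exp (y * (OP - f c (S \<union> {v}))) = exp (y * g) * exp (- y * marg (f c) v S)"
      by (simp add: g_def marg_def exp_add[symmetric] algebra_simps)
    have "exp (- y * marg (f c) v S) \<le> 1 - lam * marg (f c) v S"
      using exp_convex_bound[OF marg_nonneg[OF c S v] marg_le_M[OF c S v] Mpos y]
      by (simp add: lam_def field_simps)
    then have "exp (y * g) * exp (- y * marg (f c) v S) \<le> exp (y * g) * (1 - lam * marg (f c) v S)"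
      by (intro mult_left_mono) auto
    then show ?thesis using e by (simp add: mult_left_mono mult.left_commute)
  qed
  have "(\<Sum>v\<in>V. pmf (sel S) v * exp (y * (OP - f c (S \<union> {v})))) \<le>
        (\<Sum>v\<in>V. exp (y * g) * (pmf (sel S) v * (1 - lam * marg (f c) v S)))"
    by (rule sum_mono) (use each in auto)
  also have "\<dots> = exp (y * g) * ((\<Sum>v\<in>V. pmf (sel S) v) - lam * (\<Sum>v\<in>V. pmf (sel S) v * marg (f c) v S))"
    by (simp add: sum_distrib_left right_diff_distrib sum_subtractf algebra_simps)
  also have "(\<Sum>v\<in>V. pmf (sel S) v) = 1" by (rule sum_pmf_eq_1[OF finV sub])
  also have "exp (y * g) * (1 - lam * (\<Sum>v\<in>V. pmf (sel S) v * marg (f c) v S)) \<le> exp (y * g) * (1 - lam * (g / real B))"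
  proof -
    have "g \<le> real B * (\<Sum>v\<in>V. pmf (sel S) v * marg (f c) v S)" using lp_bound[OF S c] g_def by simp
    then have "g / real B \<le> (\<Sum>v\<in>V. pmf (sel S) v * marg (f c) v S)" using Bpos by (simp add: divide_le_eq mult.commute)
    then have "lam * (g / real B) \<le> lam * (\<Sum>v\<in>V. pmf (sel S) v * marg (f c) v S)" using lam0 by (intro mult_left_mono)
    then show ?thesis by (intro mult_left_mono) auto
  qed
  also have "\<dots> \<le> exp (y * g) * exp (- (lam * (g / real B)))"
    using exp_ge_add_one_self[of "- (lam * (g / real B))"] by (intro mult_left_mono) auto
  also have "\<dots> = exp (h y * g)"
    using Mpos Bpos by (simp add: exp_add[symmetric] h_def lam_def algebra_simps diff_divide_distrib)
  finally show ?thesis by (simp add: g_def)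
qed

lemma run_support: "S \<in> set_pmf (greedy_run sel i) \<Longrightarrow> S \<subseteq> V \<and> card S \<le> i"
proof (induction i arbitrary: S)
  case 0 then show ?case by simp
next
  case (Suc i)
  then obtain S' v where S': "S' \<in> set_pmf (greedy_run sel i)" and v: "v \<in> set_pmf (sel S')" and S: "S = S' \<union> {v}"
    by auto
  have IH: "S' \<subseteq> V" "card S' \<le> i" using Suc.IH[OF S'] by auto
  have "v \<in> V" using selopt[OF IH(1)] v unfolding lp_optimal_def by blast
  moreover have "finite S'" using IH finV finite_subset by blast
  ultimately show ?case using IH S by (auto simp: card_insert_if)
qed

lemma run_mgf:
  assumes c: "c \<in> C"
  shows "y \<ge> 0 \<Longrightarrow> (\<integral>\<^sup>+S. ennreal (exp (y * (OP - f c S))) \<partial>measure_pmf (greedy_run sel i)) \<le> ennreal (exp ((h ^^ i) y * OP))"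
proof (induction i arbitrary: y)
  case 0
  have "f c {} \<ge> 0" using nonneg[OF c] by auto
  then show ?case using 0 by (simp add: mult_left_mono)
next
  case (Suc i)
  have inner: "(\<integral>\<^sup>+v. ennreal (exp (y * (OP - f c (S \<union> {v})))) \<partial>measure_pmf (sel S)) \<le> ennreal (exp (h y * (OP - f c S)))"
    if S: "S \<subseteq> V" for S
  proof -
    have sub: "set_pmf (sel S) \<subseteq> V" using selopt[OF S] unfolding lp_optimal_def by blast
    have "(\<integral>\<^sup>+v. ennreal (exp (y * (OP - f c (S \<union> {v})))) \<partial>measure_pmf (sel S)) =
          (\<Sum>v\<in>V. ennreal (exp (y * (OP - f c (S \<union> {v})))) * pmf (sel S) v)"
      by (rule nn_integral_measure_pmf_support) (use finV sub in auto)
    also have "\<dots> = ennreal (\<Sum>v\<in>V. pmf (sel S) v * exp (y * (OP - f c (S \<union> {v}))))"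
      by (subst sum_ennreal[symmetric]) (auto simp: ennreal_mult'' mult.commute)
    also have "\<dots> \<le> ennreal (exp (h y * (OP - f c S)))"
      by (rule ennreal_leI, rule step_bound[OF S c Suc.prems])
    finally show ?thesis .
  qed
  have "(\<integral>\<^sup>+S. ennreal (exp (y * (OP - f c S))) \<partial>measure_pmf (greedy_run sel (Suc i))) =
        (\<integral>\<^sup>+S. (\<integral>\<^sup>+v. ennreal (exp (y * (OP - f c (S \<union> {v})))) \<partial>measure_pmf (sel S)) \<partial>measure_pmf (greedy_run sel i))"
    by simp
  also have "\<dots> \<le> (\<integral>\<^sup>+S. ennreal (exp (h y * (OP - f c S))) \<partial>measure_pmf (greedy_run sel i))"
    by (rule nn_integral_mono_AE) (use inner run_support in \<open>auto simp: AE_measure_pmf_iff\<close>)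
  also have "\<dots> \<le> ennreal (exp ((h ^^ i) (h y) * OP))"
    by (rule Suc.IH) (rule h_nonneg[OF Suc.prems])
  also have "(h ^^ i) (h y) = (h ^^ Suc i) y" by (simp only: funpow_Suc_right comp_def)
  finally show ?case .
qed

end

context setting begin

lemma h_le:
  assumes e: "\<epsilon> > 0" and y: "0 \<le> y" "y \<le> \<epsilon> / M"
  shows "h y \<le> y * (1 - 1 / (real B * (1 + \<epsilon>)))"
proof -
  have yM: "y * M \<le> \<epsilon>" using y Mpos by (simp add: le_divide_eq)
  have yM0: "y * M \<ge> 0" using y Mpos by simp
  have "exp (y * M) \<ge> 1 + y * M" by simp
  then have "exp (- y * M) \<le> 1 / (1 + y * M)"
    using yM0 by (simp add: exp_minus field_simps)
  then have "1 - exp (- y * M) \<ge> y * M / (1 + y * M)"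
    using yM0 by (simp add: field_simps)
  moreover have "y * M / (1 + y * M) \<ge> y * M / (1 + \<epsilon>)"
    using yM yM0 e by (intro divide_left_mono) auto
  ultimately have "1 - exp (- y * M) \<ge> y * M / (1 + \<epsilon>)" by linarith
  then have "(1 - exp (- y * M)) / (M * real B) \<ge> (y * M / (1 + \<epsilon>)) / (M * real B)"
    using Mpos Bpos by (intro divide_right_mono) auto
  also have "(y * M / (1 + \<epsilon>)) / (M * real B) = y / (real B * (1 + \<epsilon>))"
  proof -
    have "(y * M / (1 + \<epsilon>)) / (M * real B) = (M * y) / (M * (real B * (1 + \<epsilon>)))"
      by (simp add: divide_divide_eq_left ac_simps)
    also have "\<dots> = y / (real B * (1 + \<epsilon>))" using Mpos by (rule mult_divide_mult_cancel_left[OF less_imp_neq[symmetric]])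
    finally show ?thesis .
  qed
  finally show ?thesis unfolding h_def by (simp add: algebra_simps)
qed

lemma h_iter:
  assumes e: "\<epsilon> > 0"
  shows "0 \<le> (h ^^ j) (\<epsilon> / M) \<and> (h ^^ j) (\<epsilon> / M) \<le> (\<epsilon> / M) * (1 - 1 / (real B * (1 + \<epsilon>))) ^ j"
proof (induction j)
  case 0 then show ?case using e Mpos by simp
next
  case (Suc j)
  define q where "q = 1 - 1 / (real B * (1 + \<epsilon>))"
  have "1 \<le> real B * (1 + \<epsilon>)" using Bpos e by (simp add: algebra_simps add_increasing2)
  then have q: "0 \<le> q" "q \<le> 1" using Bpos e unfolding q_def by auto
  define y where "y = (h ^^ j) (\<epsilon> / M)"
  have y: "0 \<le> y" "y \<le> (\<epsilon> / M) * q ^ j" using Suc.IH unfolding y_def q_def by auto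
  have "q ^ j \<le> 1" using q by (simp add: power_le_one)
  then have "(\<epsilon> / M) * q ^ j \<le> \<epsilon> / M" using e Mpos by (intro mult_left_le) auto
  then have "h y \<le> y * q" using h_le[OF e y(1)] y(2) unfolding q_def by linarith
  also have "\<dots> \<le> (\<epsilon> / M) * q ^ j * q" using y q by (intro mult_right_mono) auto
  finally have "h y \<le> (\<epsilon> / M) * q ^ Suc j" by (simp only: power_Suc2 mult.assoc)
  then show ?case using h_nonneg[OF y(1)] unfolding y_def q_def by simp
qed

lemma h_final:
  assumes e: "\<epsilon> > 0"
  shows "(h ^^ B) (\<epsilon> / M) \<le> (\<epsilon> / M) * exp (- 1 / (1 + \<epsilon>))"
proof -
  define q where "q = 1 - 1 / (real B * (1 + \<epsilon>))"
  have "1 \<le> real B * (1 + \<epsilon>)" using Bpos e by (simp add: algebra_simps add_increasing2)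
  then have q: "0 \<le> q" using Bpos e unfolding q_def by auto
  have "q \<le> exp (- (1 / (real B * (1 + \<epsilon>))))" unfolding q_def
    using exp_ge_add_one_self[of "- (1 / (real B * (1 + \<epsilon>)))"] by simp
  then have "q ^ B \<le> exp (- (1 / (real B * (1 + \<epsilon>)))) ^ B" using q by (rule power_mono)
  also have "\<dots> = exp (real B * (- (1 / (real B * (1 + \<epsilon>)))))" by (rule exp_of_nat_mult[symmetric])
  also have "real B * (- (1 / (real B * (1 + \<epsilon>)))) = - 1 / (1 + \<epsilon>)" using Bpos e by simp
  finally have "q ^ B \<le> exp (- 1 / (1 + \<epsilon>))" .
  then have "(\<epsilon> / M) * q ^ B \<le> (\<epsilon> / M) * exp (- 1 / (1 + \<epsilon>))" using e Mpos by (intro mult_left_mono) auto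
  with h_iter[OF e, of B] show ?thesis unfolding q_def by linarith
qed

lemma markov:
  assumes c: "c \<in> C" and y: "y \<ge> 0"
  shows "measure_pmf.prob (greedy_run sel B) {S. a < OP - f c S} * exp (y * a) \<le> exp ((h ^^ B) y * OP)"
proof -
  let ?p = "greedy_run sel B"
  let ?A = "{S. a < OP - f c S}"
  have "(\<integral>\<^sup>+S. ennreal (exp (y * a)) * indicator ?A S \<partial>measure_pmf ?p) \<le>
        (\<integral>\<^sup>+S. ennreal (exp (y * (OP - f c S))) \<partial>measure_pmf ?p)"
  proof (rule nn_integral_mono)
    fix S
    show "ennreal (exp (y * a)) * indicator ?A S \<le> ennreal (exp (y * (OP - f c S)))"
      using y by (auto simp: indicator_def intro!: ennreal_leI mult_left_mono)
  qed
  also have "\<dots> \<le> ennreal (exp ((h ^^ B) y * OP))" by (rule run_mgf[OF c y])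
  finally have "ennreal (exp (y * a)) * emeasure ?p ?A \<le> ennreal (exp ((h ^^ B) y * OP))"
    by (simp add: nn_integral_cmult_indicator)
  then have "ennreal (exp (y * a) * measure_pmf.prob ?p ?A) \<le> ennreal (exp ((h ^^ B) y * OP))"
    by (simp add: measure_pmf.emeasure_eq_measure ennreal_mult)
  then show ?thesis by (simp add: mult.commute)
qed

lemma run_good:
  assumes e: "\<epsilon> > 0"
    and OPTge: "OP \<ge> 4 / \<epsilon>\<^sup>2 * M * ln (2 * real (card C))"
  shows "measure_pmf.prob (greedy_run sel B) {S. minval C f S < (1 - 1 / exp 1 - \<epsilon>) * OP} \<le> 1 / 2"
proof (cases "(1 - 1 / exp 1 - \<epsilon>) * OP \<le> 0")
  case True
  have "set_pmf (greedy_run sel B) \<inter> {S. minval C f S < (1 - 1 / exp 1 - \<epsilon>) * OP} = {}"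
  proof (safe)
    fix S assume S: "S \<in> set_pmf (greedy_run sel B)" "minval C f S < (1 - 1 / exp 1 - \<epsilon>) * OP"
    have SV: "S \<subseteq> V" using run_support[OF S(1)] by blast
    have "minval C f S \<ge> 0" unfolding minval_def using finC neC nonneg[OF _ SV] by (subst Min_ge_iff) auto
    with S True show "S \<in> {}" by linarith
  qed
  then show ?thesis by (simp add: measure_pmf_zero_iff[THEN iffD2])
next
  case False
  define k where "k = real (card C)"
  have k1: "k \<ge> 1" using finC neC by (simp add: k_def Suc_le_eq card_gt_0_iff)
  have ln0: "ln (2 * k) > 0" using k1 by simp
  have OP0: "OP > 0"
  proof -
    have "4 / \<epsilon>\<^sup>2 * M * ln (2 * k) > 0" using e Mpos ln0 by simp
    then show ?thesis using OPTge unfolding k_def by linarith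
  qed
  have eps_small: "\<epsilon> < 1 - exp (- 1)" using False OP0 by (simp add: exp_minus mult_le_0_iff not_le inverse_eq_divide)
  define \<eta> where "\<eta> = \<epsilon> / M"
  have eta0: "\<eta> > 0" using e Mpos by (simp add: \<eta>_def)
  define a where "a = (exp (-1) + \<epsilon>) * OP"
  define \<eta>0 where "\<eta>0 = (h ^^ B) \<eta>"
  have ex1: "exp (- 1 / (1 + \<epsilon>)) \<le> exp (-1) * exp \<epsilon>"
  proof -
    have "- 1 / (1 + \<epsilon>) \<le> -1 + \<epsilon>"
    proof -
      have "(1 - \<epsilon>) * (1 + \<epsilon>) \<le> 1" by (simp add: algebra_simps)
      then show ?thesis using e by (simp add: field_simps)
    qed
    then show ?thesis by (simp add: exp_add[symmetric])
  qed
  have ex2: "exp \<epsilon> - 1 \<le> \<epsilon> * exp \<epsilon>"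
  proof -
    have "1 - \<epsilon> \<le> exp (- \<epsilon>)" using exp_ge_add_one_self[of "-\<epsilon>"] by simp
    then have "(1 - \<epsilon>) * exp \<epsilon> \<le> exp (- \<epsilon>) * exp \<epsilon>" by (intro mult_right_mono) auto
    then show ?thesis by (simp add: exp_minus algebra_simps)
  qed
  have ex3: "exp (\<epsilon> - 1) \<le> 3 / 4"
  proof -
    have x: "exp (-1::real) \<ge> 1 / 3" using exp_le by (simp add: exp_minus field_simps)
    have "exp (exp (-1)) \<ge> 1 + exp (-1::real)" by (rule exp_ge_add_one_self)
    then have "inverse (exp (exp (-1))) \<le> inverse (1 + exp (-1::real))"
      by (rule le_imp_inverse_le) (simp add: add_pos_pos)
    then have "exp (- exp (-1)) \<le> (1::real) / (1 + exp (-1))" by (simp only: exp_minus inverse_eq_divide)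
    also have "\<dots> \<le> 3 / 4" using x by (simp add: field_simps)
    finally have "exp (- exp (-1)) \<le> (3::real) / 4" .
    moreover have "exp (\<epsilon> - 1) \<le> exp (- exp (-1))" using eps_small by simp
    ultimately show ?thesis by linarith
  qed
  have key: "exp (- 1 / (1 + \<epsilon>)) - exp (-1) - \<epsilon> \<le> - \<epsilon> / 4"
  proof -
    have "exp (-1) * exp \<epsilon> - exp (-1) = exp (-1) * (exp \<epsilon> - 1)" by (simp add: algebra_simps)
    also have "\<dots> \<le> exp (-1) * (\<epsilon> * exp \<epsilon>)" using ex2 by (intro mult_left_mono) auto
    also have "\<dots> = \<epsilon> * exp (\<epsilon> - 1)" by (simp add: exp_diff exp_minus field_simps)
    also have "\<dots> \<le> \<epsilon> * (3/4)" using ex3 e by (intro mult_left_mono) auto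
    finally show ?thesis using ex1 by linarith
  qed
  have eta0b: "\<eta>0 \<le> \<eta> * exp (- 1 / (1 + \<epsilon>))" unfolding \<eta>0_def \<eta>_def by (rule h_final[OF e])
  have expo: "\<eta>0 * OP - \<eta> * a \<le> - ln (2 * k)"
  proof -
    have "\<eta>0 * OP - \<eta> * a \<le> \<eta> * exp (- 1 / (1 + \<epsilon>)) * OP - \<eta> * a"
      using eta0b OP0 by (simp add: mult_right_mono)
    also have "\<dots> = \<eta> * OP * (exp (- 1 / (1 + \<epsilon>)) - exp (-1) - \<epsilon>)" by (simp add: a_def algebra_simps)
    also have "\<dots> \<le> \<eta> * OP * (- \<epsilon> / 4)" using key eta0 OP0 by (intro mult_left_mono) auto
    also have "\<eta> * OP * (- \<epsilon> / 4) = - (\<epsilon>\<^sup>2 * OP / (4 * M))" using Mpos by (simp add: \<eta>_def power2_eq_square field_simps)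
    also have "\<dots> \<le> - ln (2 * k)"
    proof -
      have "4 / \<epsilon>\<^sup>2 * M * ln (2 * k) \<le> OP" using OPTge k_def by simp
      then have "ln (2 * k) \<le> \<epsilon>\<^sup>2 * OP / (4 * M)" using e Mpos by (simp add: field_simps)
      then show ?thesis by simp
    qed
    finally show ?thesis .
  qed
  have each: "measure_pmf.prob (greedy_run sel B) {S. a < OP - f c S} \<le> 1 / (2 * k)" if c: "c \<in> C" for c
  proof -
    have m: "measure_pmf.prob (greedy_run sel B) {S. a < OP - f c S} * exp (\<eta> * a) \<le> exp (\<eta>0 * OP)"
      unfolding \<eta>0_def by (rule markov[OF c]) (use eta0 in simp)
    have "exp (\<eta>0 * OP) = exp (\<eta>0 * OP - \<eta> * a) * exp (\<eta> * a)" by (simp add: exp_diff)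
    also have "exp (\<eta>0 * OP - \<eta> * a) \<le> exp (- ln (2 * k))" using expo by simp
    also have "exp (- ln (2 * k)) = 1 / (2 * k)" using k1 by (simp add: exp_minus inverse_eq_divide)
    finally have "measure_pmf.prob (greedy_run sel B) {S. a < OP - f c S} * exp (\<eta> * a) \<le> 1 / (2 * k) * exp (\<eta> * a)"
      using m by (simp add: mult_right_mono)
    then show ?thesis by (rule mult_right_le_imp_le) simp
  qed
  have sub: "{S. minval C f S < (1 - 1 / exp 1 - \<epsilon>) * OP} \<subseteq> (\<Union>c\<in>C. {S. a < OP - f c S})"
  proof
    fix S assume "S \<in> {S. minval C f S < (1 - 1 / exp 1 - \<epsilon>) * OP}"
    then have "Min ((\<lambda>c. f c S) ` C) < (1 - 1 / exp 1 - \<epsilon>) * OP" by (simp add: minval_def)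
    then obtain c where c: "c \<in> C" "f c S < (1 - 1 / exp 1 - \<epsilon>) * OP"
      using finC neC by (subst (asm) Min_less_iff) auto
    then have "a < OP - f c S" by (simp add: a_def exp_minus algebra_simps inverse_eq_divide)
    with c show "S \<in> (\<Union>c\<in>C. {S. a < OP - f c S})" by blast
  qed
  have "measure_pmf.prob (greedy_run sel B) {S. minval C f S < (1 - 1 / exp 1 - \<epsilon>) * OP}
        \<le> measure_pmf.prob (greedy_run sel B) (\<Union>c\<in>C. {S. a < OP - f c S})"
    by (rule measure_pmf.finite_measure_mono[OF sub]) simp
  also have "\<dots> \<le> (\<Sum>c\<in>C. measure_pmf.prob (greedy_run sel B) {S. a < OP - f c S})"
    by (rule measure_pmf.finite_measure_subadditive_finite) (use finC in auto)
  also have "\<dots> \<le> (\<Sum>c\<in>C. 1 / (2 * k))" by (rule sum_mono) (rule each)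
  also have "\<dots> = 1 / 2" using k1 by (simp add: k_def)
  finally show ?thesis .
qed

end

context setting begin

lemma rep_support: "S \<in> set_pmf (alg_rep C f B sel r) \<Longrightarrow> card S \<le> B"
proof (induction r arbitrary: S)
  case 0 then show ?case by simp
next
  case (Suc r)
  then show ?case using run_support by (auto split: if_splits)
qed

lemma rep_bad:
  assumes run: "measure_pmf.prob (greedy_run sel B) {S. minval C f S < \<tau>} \<le> 1 / 2"
  shows "emeasure (measure_pmf (alg_rep C f B sel r)) {S. \<not> (card S \<le> B \<and> \<tau> \<le> minval C f S)} \<le> ennreal ((1 / 2) ^ r)"
proof (induction r)
  case 0 then show ?case by (simp split: split_indicator)
next
  case (Suc r)
  let ?Bd = "{S. \<not> (card S \<le> B \<and> \<tau> \<le> minval C f S)}"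
  let ?RB = "{S. minval C f S < \<tau>}"
  let ?run = "greedy_run sel B"
  let ?g = "\<lambda>Sb S. if minval C f S \<ge> minval C f Sb then S else Sb"
  have pt: "emeasure (measure_pmf ?run) (?g Sb -` ?Bd) \<le> ennreal (1 / 2) * indicator ?Bd Sb"
    if Sb: "Sb \<in> set_pmf (alg_rep C f B sel r)" for Sb
  proof -
    have cSb: "card Sb \<le> B" using rep_support[OF Sb] .
    have eq: "emeasure (measure_pmf ?run) (?g Sb -` ?Bd) = emeasure (measure_pmf ?run) (?g Sb -` ?Bd \<inter> set_pmf ?run)"
      by (simp add: emeasure_Int_set_pmf)
    show ?thesis
    proof (cases "Sb \<in> ?Bd")
      case False
      have "?g Sb S \<notin> ?Bd" if S: "S \<in> set_pmf ?run" for S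
      proof -
        have "card S \<le> B" using run_support[OF S] by simp
        with False show ?thesis by (auto split: if_splits)
      qed
      then have "?g Sb -` ?Bd \<inter> set_pmf ?run = {}" by blast
      then show ?thesis using eq by simp
    next
      case True
      have "S \<in> ?RB" if S: "S \<in> set_pmf ?run" "?g Sb S \<in> ?Bd" for S
      proof -
        have "card S \<le> B" using run_support[OF S(1)] by simp
        with S True cSb show ?thesis by (auto split: if_splits)
      qed
      then have "?g Sb -` ?Bd \<inter> set_pmf ?run \<subseteq> ?RB" by blast
      then have "emeasure (measure_pmf ?run) (?g Sb -` ?Bd \<inter> set_pmf ?run) \<le> emeasure (measure_pmf ?run) ?RB"
        by (rule emeasure_mono) simp
      also have "\<dots> = ennreal (measure_pmf.prob ?run ?RB)" by (simp add: measure_pmf.emeasure_eq_measure)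
      also have "\<dots> \<le> ennreal (1 / 2)" using run by (rule ennreal_leI)
      finally show ?thesis using eq True by simp
    qed
  qed
  have "emeasure (measure_pmf (alg_rep C f B sel (Suc r))) ?Bd =
        (\<integral>\<^sup>+Sb. emeasure (measure_pmf ?run) (?g Sb -` ?Bd) \<partial>measure_pmf (alg_rep C f B sel r))"
    by simp
  also have "\<dots> \<le> (\<integral>\<^sup>+Sb. ennreal (1 / 2) * indicator ?Bd Sb \<partial>measure_pmf (alg_rep C f B sel r))"
    by (rule nn_integral_mono_AE) (use pt in \<open>auto simp: AE_measure_pmf_iff\<close>)
  also have "\<dots> = ennreal (1 / 2) * emeasure (measure_pmf (alg_rep C f B sel r)) ?Bd"
    by (simp add: nn_integral_cmult_indicator)
  also have "\<dots> \<le> ennreal (1 / 2) * ennreal ((1 / 2) ^ r)" using Suc.IH by (rule mult_left_mono) simp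
  also have "\<dots> = ennreal (1 / 2 * (1 / 2) ^ r)" by (rule ennreal_mult[symmetric]) auto
  also have "\<dots> = ennreal ((1 / 2) ^ Suc r)" by (simp only: power_Suc)
  finally show ?case .
qed

end

theorem theorem1:
  fixes V :: "'v set" and C :: "'c set" and f :: "'c \<Rightarrow> 'v set \<Rightarrow> real"
    and M :: real and B :: nat and \<epsilon> \<delta> :: real and sel :: "'v set \<Rightarrow> 'v pmf"
  assumes "finite V" "V \<noteq> {}" "finite C" "C \<noteq> {}"
    and "\<And>c S. c \<in> C \<Longrightarrow> S \<subseteq> V \<Longrightarrow> f c S \<ge> 0"
    and "\<And>c. c \<in> C \<Longrightarrow> monotone_on_sets V (f c)"
    and "\<And>c. c \<in> C \<Longrightarrow> submodular_on V (f c)"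
    and "B > 0"
    and "\<epsilon> > 0" and "0 < \<delta>" and "\<delta> < 1"
    and "\<And>S. S \<subseteq> V \<Longrightarrow> lp_optimal V C f B S (sel S)"
    and M_def: "M = Max ((\<lambda>(c, v). marg (f c) v {}) ` (C \<times> V))"
    and "M > 0"
    and "OPT V C f B \<ge> 4 / \<epsilon>\<^sup>2 * M * ln (2 * real (card C))"
  shows "measure_pmf.prob (algorithm2 C f B sel \<delta>)
           {S. card S \<le> B \<and> minval C f S \<ge> (1 - 1 / exp 1 - \<epsilon>) * OPT V C f B}
         \<ge> 1 - \<delta>"
proof -
  interpret setting V C f M B sel
    by unfold_locales (use assms in auto)
  define \<tau> where "\<tau> = (1 - 1 / exp 1 - \<epsilon>) * OPT V C f B"
  define r where "r = nat \<lceil>log 2 (2 / \<delta>)\<rceil>"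
  let ?Bd = "{S. \<not> (card S \<le> B \<and> \<tau> \<le> minval C f S)}"
  let ?p = "algorithm2 C f B sel \<delta>"
  have p: "?p = alg_rep C f B sel r" unfolding algorithm2_def r_def ..
  have run: "measure_pmf.prob (greedy_run sel B) {S. minval C f S < \<tau>} \<le> 1 / 2"
    unfolding \<tau>_def by (rule run_good) (use assms in auto)
  have "ennreal (measure_pmf.prob ?p ?Bd) = emeasure (measure_pmf ?p) ?Bd"
    by (simp add: measure_pmf.emeasure_eq_measure)
  also have "\<dots> \<le> ennreal ((1 / 2) ^ r)" unfolding p by (rule rep_bad[OF run])
  finally have pb: "measure_pmf.prob ?p ?Bd \<le> (1 / 2) ^ r" by simp
  have "(1 / 2) ^ r \<le> \<delta>"
  proof -
    have "log 2 (2 / \<delta>) \<le> real r" unfolding r_def by linarith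
    then have "2 powr (log 2 (2 / \<delta>)) \<le> 2 powr (real r)" by simp
    then have "2 / \<delta> \<le> 2 ^ r" using assms by (simp add: powr_realpow)
    then have "1 / \<delta> \<le> 2 ^ r" using assms by (simp add: divide_le_eq)
    then show ?thesis using assms by (simp add: power_one_over field_simps)
  qed
  with pb have pb2: "measure_pmf.prob ?p ?Bd \<le> \<delta>" by linarith
  have "{S. card S \<le> B \<and> minval C f S \<ge> (1 - 1 / exp 1 - \<epsilon>) * OPT V C f B} = space (measure_pmf ?p) - ?Bd"
    by (auto simp: \<tau>_def)
  moreover have "measure_pmf.prob ?p (space (measure_pmf ?p) - ?Bd) = 1 - measure_pmf.prob ?p ?Bd"
    by (rule measure_pmf.prob_compl) simp
  ultimately have "measure_pmf.prob ?p {S. card S \<le> B \<and> minval C f S \<ge> (1 - 1 / exp 1 - \<epsilon>) * OPT V C f B} = 1 - measure_pmf.prob ?p ?Bd"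
    by simp
  with pb2 show ?thesis by linarith
qed

end
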